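(* Let $s\geq 2$ be an integer and let $T$ be a tree with $n$ vertices in which every vertex has degree at most $s$, with Wiener index $\mathcal{W}$. Define $\mathcal{V}_{0,s}=T$ and, for $t\geq1$, let $\mathcal{V}_{t,s}$ be obtained from $\mathcal{V}_{t-1,s}$ by one application of the Vicsek fractal operation $V_s$. Then $\mathcal{V}_{t,s}$ has $n(s+1)^t$ vertices and its Wiener index is $$\mathcal{W}_{\mathcal{V}_{t,s}}=3^{t}(s+1)^{2t}\mathcal{W}+\frac{(s-2)(s+1)\,n^{2}(3^{t}-1)(s+1)^{2(t-1)}}{2}+\frac{(s+2)\,n(s+1)^{t-1}\left[3^{t}(s+1)^{t}-1\right]}{3s+2}.$$
   Context: All graphs are simple and connected. The distance $d_{uv}$ is the number of edges of a shortest path between $u$ and $v$; the Wiener index of a graph is the sum of $d_{uv}$ over all unordered pairs of distinct vertices. The Vicsek fractal operation $V_s$ applied to a tree whose maximum degree is at most $s$: every edge $uv$ is replaced by a path $u-a-b-v$ through two new vertices, and then each original vertex $v$ of degree $k_v$ (in the tree before the operation) receives $s-k_v$ new pendant leaves, so that every original vertex has degree $s$; the inserted vertices receive no further leaves. The result is again a tree of maximum degree at most $s$, so the operation can be iterated. *)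

theory Defs
  imports Complex_Main
begin

type_synonym 'a graph = "'a set \<times> 'a set set"

definition verts :: "'a graph \<Rightarrow> 'a set" where "verts G = fst G"
definition edges :: "'a graph \<Rightarrow> 'a set set" where "edges G = snd G"

definition simple_graph :: "'a graph \<Rightarrow> bool" where
  "simple_graph G \<longleftrightarrow> finite (verts G) \<and>
     (\<forall>e\<in>edges G. \<exists>u v. e = {u, v} \<and> u \<noteq> v \<and> u \<in> verts G \<and> v \<in> verts G)"

definition degree :: "'a graph \<Rightarrow> 'a \<Rightarrow> nat" where
  "degree G v = card {e \<in> edges G. v \<in> e}"

text \<open>A walk is a nonempty vertex list with consecutive vertices adjacent; its length is
  the number of edges, i.e. length xs - 1.\<close>
definition walk :: "'a graph \<Rightarrow> 'a list \<Rightarrow> bool" where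
  "walk G xs \<longleftrightarrow> xs \<noteq> [] \<and> set xs \<subseteq> verts G \<and>
     (\<forall>i. Suc i < length xs \<longrightarrow> {xs ! i, xs ! Suc i} \<in> edges G)"

definition connected_graph :: "'a graph \<Rightarrow> bool" where
  "connected_graph G \<longleftrightarrow> verts G \<noteq> {} \<and>
     (\<forall>u\<in>verts G. \<forall>v\<in>verts G. \<exists>xs. walk G xs \<and> hd xs = u \<and> last xs = v)"

definition has_cycle :: "'a graph \<Rightarrow> bool" where
  "has_cycle G \<longleftrightarrow> (\<exists>xs. walk G xs \<and> distinct xs \<and> length xs \<ge> 3 \<and> {last xs, hd xs} \<in> edges G)"

definition is_tree :: "'a graph \<Rightarrow> bool" where
  "is_tree G \<longleftrightarrow> simple_graph G \<and> connected_graph G \<and> \<not> has_cycle G"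

definition gdist :: "'a graph \<Rightarrow> 'a \<Rightarrow> 'a \<Rightarrow> nat" where
  "gdist G u v = (LEAST k. \<exists>xs. walk G xs \<and> hd xs = u \<and> last xs = v \<and> length xs = Suc k)"

text \<open>Wiener index: sum of distances over unordered pairs of distinct vertices
  (each unordered pair counted once: half the sum over ordered pairs; diagonal terms are 0).\<close>
definition wiener :: "'a graph \<Rightarrow> real" where
  "wiener G = (\<Sum>u\<in>verts G. \<Sum>v\<in>verts G. real (gdist G u v)) / 2"

text \<open>Labels of the vertices of V_s(G): original vertices, the two subdivision vertices of
  each edge {u,v} (Sub u v is the one adjacent to u), and the new pendant leaves.\<close>
datatype 'a vlabel = Old 'a | Sub 'a 'a | Leaf 'a nat

definition vicsek_labels :: "nat \<Rightarrow> 'a graph \<Rightarrow> 'a vlabel set" where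
  "vicsek_labels s G = Old ` verts G \<union> {Sub u v | u v. {u, v} \<in> edges G \<and> u \<noteq> v}
     \<union> {Leaf v i | v i. v \<in> verts G \<and> i < s - degree G v}"

text \<open>H is (an isomorphic copy of) the result of applying the Vicsek operation V_s to G:
  the labels are realised injectively by vertices of H via phi.\<close>
definition vicsek_step :: "nat \<Rightarrow> 'a graph \<Rightarrow> 'a graph \<Rightarrow> bool" where
  "vicsek_step s G H \<longleftrightarrow> (\<exists>\<phi>. inj_on \<phi> (vicsek_labels s G) \<and>
     verts H = \<phi> ` vicsek_labels s G \<and>
     edges H =
       {{\<phi> (Old u), \<phi> (Sub u v)} | u v. {u, v} \<in> edges G \<and> u \<noteq> v}
       \<union> {{\<phi> (Sub u v), \<phi> (Sub v u)} | u v. {u, v} \<in> edges G \<and> u \<noteq> v}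
       \<union> {{\<phi> (Old v), \<phi> (Leaf v i)} | v i. v \<in> verts G \<and> i < s - degree G v})"

end

theory Submission
  imports Defs
begin


fun wk :: "'a graph \<Rightarrow> 'a list \<Rightarrow> bool" where
  "wk G [] = False"
| "wk G [x] = (x \<in> verts G)"
| "wk G (x # y # xs) = (x \<in> verts G \<and> {x, y} \<in> edges G \<and> wk G (y # xs))"

lemma walk_single: "walk G [x] \<longleftrightarrow> x \<in> verts G"
  by (auto simp: walk_def)

lemma walk_cons2: "walk G (x # y # xs) \<longleftrightarrow> x \<in> verts G \<and> {x, y} \<in> edges G \<and> walk G (y # xs)"
proof
  assume a: "walk G (x # y # xs)"
  have A: "\<And>i. Suc i < length (x # y # xs) \<Longrightarrow> {(x # y # xs) ! i, (x # y # xs) ! Suc i} \<in> edges G"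
    using a unfolding walk_def by blast
  have "{x, y} \<in> edges G" using A[of 0] by simp
  moreover have "walk G (y # xs)" unfolding walk_def
  proof (intro conjI allI impI)
    fix i assume "Suc i < length (y # xs)"
    then have "Suc (Suc i) < length (x # y # xs)" by simp
    from A[OF this] show "{(y # xs) ! i, (y # xs) ! Suc i} \<in> edges G" by simp
  next
    show "set (y # xs) \<subseteq> verts G" using a unfolding walk_def by simp
  qed simp
  moreover have "x \<in> verts G" using a unfolding walk_def by simp
  ultimately show "x \<in> verts G \<and> {x, y} \<in> edges G \<and> walk G (y # xs)" by blast
next
  assume a: "x \<in> verts G \<and> {x, y} \<in> edges G \<and> walk G (y # xs)"
  have A: "\<And>i. Suc i < length (y # xs) \<Longrightarrow> {(y # xs) ! i, (y # xs) ! Suc i} \<in> edges G"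
    using a unfolding walk_def by blast
  show "walk G (x # y # xs)" unfolding walk_def
  proof (intro conjI allI impI)
    fix i assume i: "Suc i < length (x # y # xs)"
    show "{(x # y # xs) ! i, (x # y # xs) ! Suc i} \<in> edges G"
    proof (cases i)
      case 0 then show ?thesis using a by simp
    next
      case (Suc j)
      then have "Suc j < length (y # xs)" using i by simp
      from A[OF this] show ?thesis using Suc by simp
    qed
  next
    show "set (x # y # xs) \<subseteq> verts G" using a unfolding walk_def by simp
  qed simp
qed

lemma walk_wk: "walk G xs \<longleftrightarrow> wk G xs"
proof (induction G xs rule: wk.induct)
  case (1 G) then show ?case by (simp add: walk_def)
next
  case (2 G x) then show ?case by (simp add: walk_single)
next
  case (3 G x y xs) then show ?case by (simp add: walk_cons2)
qed

lemma wk_nonempty: "wk G xs \<Longrightarrow> xs \<noteq> []" by auto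

lemma wk_set: "wk G xs \<Longrightarrow> set xs \<subseteq> verts G"
  by (induction G xs rule: wk.induct) auto

lemma wk_cons: "wk G ys \<Longrightarrow> x \<in> verts G \<Longrightarrow> {x, hd ys} \<in> edges G \<Longrightarrow> wk G (x # ys)"
  by (cases ys) auto

lemma wk_append: "wk G xs \<Longrightarrow> wk G ys \<Longrightarrow> {last xs, hd ys} \<in> edges G \<Longrightarrow> wk G (xs @ ys)"
proof (induction G xs rule: wk.induct)
  case (1 G) then show ?case by simp
next
  case (2 G x) then show ?case by (cases ys) auto
next
  case (3 G x y xs) then show ?case by auto
qed

lemma wk_rev: "wk G xs \<Longrightarrow> wk G (rev xs)"
proof (induction G xs rule: wk.induct)
  case (1 G) then show ?case by simp
next
  case (2 G x) then show ?case by simp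
next
  case (3 G x y xs)
  then have "wk G (rev (y # xs))" by simp
  moreover have "last (rev (y # xs)) = y" by simp
  ultimately have "wk G (rev (y # xs) @ [x])"
    using 3 by (intro wk_append) (auto simp: insert_commute)
  then show ?case by simp
qed

lemma wk_take: "wk G xs \<Longrightarrow> 0 < n \<Longrightarrow> wk G (take n xs)"
proof (induction G xs arbitrary: n rule: wk.induct)
  case (1 G) then show ?case by simp
next
  case (2 G x) then show ?case by (cases n) auto
next
  case (3 G x y xs)
  show ?case
  proof (cases n)
    case 0 then show ?thesis using 3 by simp
  next
    case (Suc m)
    show ?thesis
    proof (cases m)
      case 0 then show ?thesis using 3 Suc by simp
    next
      case (Suc k)
      have "wk G (take m (y # xs))" using 3(1)[of m] 3(2) \<open>m = Suc k\<close> by simp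
      then have "wk G (y # take k xs)" using Suc by simp
      then show ?thesis using 3 \<open>n = Suc m\<close> Suc by simp
    qed
  qed
qed

lemma wk_nth_edge: "wk G xs \<Longrightarrow> Suc i < length xs \<Longrightarrow> {xs ! i, xs ! Suc i} \<in> edges G"
  using walk_wk[of G xs] unfolding walk_def by blast

lemma gdist_le:
  assumes "wk G xs" "hd xs = u" "last xs = v"
  shows "gdist G u v \<le> length xs - 1"
proof -
  have "length xs = Suc (length xs - 1)" using assms(1) by (cases xs) auto
  then have "\<exists>ys. walk G ys \<and> hd ys = u \<and> last ys = v \<and> length ys = Suc (length xs - 1)"
    using assms walk_wk by metis
  then show ?thesis unfolding gdist_def by (rule Least_le)
qed

lemma gdist_ex:
  assumes "wk G xs" "hd xs = u" "last xs = v"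
  shows "\<exists>ys. wk G ys \<and> hd ys = u \<and> last ys = v \<and> length ys = Suc (gdist G u v)"
proof -
  have "length xs = Suc (length xs - 1)" using assms(1) by (cases xs) auto
  then have "\<exists>k ys. walk G ys \<and> hd ys = u \<and> last ys = v \<and> length ys = Suc k"
    using assms walk_wk by metis
  then obtain k where "\<exists>ys. walk G ys \<and> hd ys = u \<and> last ys = v \<and> length ys = Suc k" by blast
  then have "\<exists>ys. walk G ys \<and> hd ys = u \<and> last ys = v \<and> length ys = Suc (gdist G u v)"
    unfolding gdist_def by (rule LeastI)
  then show ?thesis using walk_wk by metis
qed

lemma gdist_sym: "gdist G u v = gdist G v u"
proof -
  have "(\<exists>xs. walk G xs \<and> hd xs = u \<and> last xs = v \<and> length xs = Suc k) \<longleftrightarrow>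
        (\<exists>xs. walk G xs \<and> hd xs = v \<and> last xs = u \<and> length xs = Suc k)" for u v k
  proof -
    have *: "(\<exists>xs. walk G xs \<and> hd xs = u \<and> last xs = v \<and> length xs = Suc k) \<Longrightarrow>
        (\<exists>xs. walk G xs \<and> hd xs = v \<and> last xs = u \<and> length xs = Suc k)" for u v
    proof -
      assume "\<exists>xs. walk G xs \<and> hd xs = u \<and> last xs = v \<and> length xs = Suc k"
      then obtain xs where xs: "wk G xs" "hd xs = u" "last xs = v" "length xs = Suc k"
        using walk_wk by metis
      then have "xs \<noteq> []" by auto
      then have "wk G (rev xs) \<and> hd (rev xs) = v \<and> last (rev xs) = u \<and> length (rev xs) = Suc k"
        using xs wk_rev[OF xs(1)] by (auto simp: hd_rev last_rev)
      then show ?thesis using walk_wk by metis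
    qed
    show ?thesis using *[of u v] *[of v u] by blast
  qed
  then show ?thesis unfolding gdist_def by simp
qed

definition distfun :: "'a graph \<Rightarrow> 'a \<Rightarrow> ('a \<Rightarrow> nat) \<Rightarrow> bool" where
  "distfun G z f \<longleftrightarrow> z \<in> verts G \<and> f z = 0 \<and>
     (\<forall>a b. {a, b} \<in> edges G \<longrightarrow> f a = Suc (f b) \<or> f b = Suc (f a)) \<and>
     (\<forall>x\<in>verts G. x \<noteq> z \<longrightarrow> (\<exists>!y. {x, y} \<in> edges G \<and> Suc (f y) = f x))"

lemma edge_verts:
  assumes "simple_graph G" "{a, b} \<in> edges G"
  shows "a \<in> verts G" "b \<in> verts G" "a \<noteq> b"
proof -
  obtain u v where "{a, b} = {u, v}" "u \<noteq> v" "u \<in> verts G" "v \<in> verts G"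
    using assms unfolding simple_graph_def by blast
  then show "a \<in> verts G" "b \<in> verts G" "a \<noteq> b" by (auto simp: doubleton_eq_iff)
qed

lemma distfunD:
  assumes "distfun G z f"
  shows "z \<in> verts G" "f z = 0"
    "\<And>a b. {a, b} \<in> edges G \<Longrightarrow> f a = Suc (f b) \<or> f b = Suc (f a)"
    "\<And>x. x \<in> verts G \<Longrightarrow> x \<noteq> z \<Longrightarrow> \<exists>!y. {x, y} \<in> edges G \<and> Suc (f y) = f x"
  using assms unfolding distfun_def by blast+

lemma distfun_walk:
  assumes "simple_graph G" "distfun G z f"
  shows "x \<in> verts G \<Longrightarrow> \<exists>xs. wk G xs \<and> hd xs = x \<and> last xs = z \<and> length xs = Suc (f x)"
proof (induction "f x" arbitrary: x)
  case 0
  have "x = z"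
  proof (rule ccontr)
    assume "x \<noteq> z"
    then obtain y where "Suc (f y) = f x" using distfunD(4)[OF assms(2) 0(2)] by blast
    then show False using 0 by simp
  qed
  then show ?case using 0 by (intro exI[of _ "[x]"]) auto
next
  case (Suc k)
  have "x \<noteq> z" using Suc(2) distfunD(2)[OF assms(2)] by auto
  then obtain y where y: "{x, y} \<in> edges G" "Suc (f y) = f x"
    using distfunD(4)[OF assms(2) Suc(3)] by blast
  have "y \<in> verts G" using edge_verts[OF assms(1) y(1)] by blast
  then obtain ys where ys: "wk G ys" "hd ys = y" "last ys = z" "length ys = Suc (f y)"
    using Suc(1)[of y] y Suc(2) by auto
  have "wk G (x # ys)" using ys y Suc(3) by (intro wk_cons) auto
  then show ?case using ys y wk_nonempty[OF ys(1)] by (intro exI[of _ "x # ys"]) auto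
qed

lemma distfun_lower0:
  "wk G xs \<Longrightarrow> last xs = z \<Longrightarrow> distfun G z f \<Longrightarrow> f (hd xs) \<le> length xs - 1"
proof (induction G xs rule: wk.induct)
  case (1 G) then show ?case by simp
next
  case (2 G x) then show ?case by (simp add: distfun_def)
next
  case (3 G x y xs)
  then have "f y \<le> length xs" by simp
  moreover have "f x = Suc (f y) \<or> f y = Suc (f x)" using 3 distfunD(3)[OF 3(4)] by auto
  ultimately show ?case by auto
qed

lemma distfun_lower:
  assumes "distfun G z f"
  shows "wk G xs \<Longrightarrow> last xs = z \<Longrightarrow> f (hd xs) \<le> length xs - 1"
  using distfun_lower0[of G xs z f] assms by simp

lemma distfun_gdist:
  assumes "simple_graph G" "distfun G z f" "x \<in> verts G"
  shows "gdist G x z = f x"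
proof -
  obtain xs where xs: "wk G xs" "hd xs = x" "last xs = z" "length xs = Suc (f x)"
    using distfun_walk[OF assms] by blast
  then have "gdist G x z \<le> f x" using gdist_le by fastforce
  moreover obtain ys where "wk G ys" "hd ys = x" "last ys = z" "length ys = Suc (gdist G x z)"
    using gdist_ex xs by metis
  then have "f x \<le> gdist G x z" using distfun_lower[OF assms(2)] by fastforce
  ultimately show ?thesis by simp
qed

lemma distfun_cong:
  assumes "simple_graph G" "distfun G z f" "\<forall>x\<in>verts G. f x = f' x"
  shows "distfun G z f'"
proof -
  have e: "{a, b} \<in> edges G \<Longrightarrow> a \<in> verts G \<and> b \<in> verts G" for a b using edge_verts[OF assms(1)] by blast
  show ?thesis using assms(2) unfolding distfun_def
    apply (intro conjI)
    using assms(3) apply auto[2]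
    subgoal using e assms(3) by metis
    subgoal
    proof (intro ballI impI)
      fix x assume x: "x \<in> verts G" "x \<noteq> z"
      assume "z \<in> verts G \<and> f z = 0 \<and> (\<forall>a b. {a, b} \<in> edges G \<longrightarrow> f a = Suc (f b) \<or> f b = Suc (f a)) \<and>
      (\<forall>x\<in>verts G. x \<noteq> z \<longrightarrow> (\<exists>!y. {x, y} \<in> edges G \<and> Suc (f y) = f x))"
      then have "\<exists>!y. {x, y} \<in> edges G \<and> Suc (f y) = f x" using x by blast
      moreover have "{x, y} \<in> edges G \<Longrightarrow> (Suc (f y) = f x) = (Suc (f' y) = f' x)" for y
        using e assms(3) x by metis
      ultimately show "\<exists>!y. {x, y} \<in> edges G \<and> Suc (f' y) = f' x" by metis
    qed
    done
qed



inductive dsc :: "'a graph \<Rightarrow> ('a \<Rightarrow> nat) \<Rightarrow> 'a \<Rightarrow> 'a \<Rightarrow> bool" for G g b where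
  dsc_base: "dsc G g b b"
| dsc_step: "{x, y} \<in> edges G \<Longrightarrow> Suc (g y) = g x \<Longrightarrow> dsc G g b y \<Longrightarrow> dsc G g b x"

lemma dsc_ge: "dsc G g b x \<Longrightarrow> g b \<le> g x"
  by (induction rule: dsc.induct) auto

lemma distfun_zero:
  assumes "distfun G a g" "x \<in> verts G" "g x = 0"
  shows "x = a"
proof (rule ccontr)
  assume "x \<noteq> a"
  then obtain y where "Suc (g y) = g x" using distfunD(4)[OF assms(1) assms(2)] by blast
  then show False using assms by simp
qed

lemma reroot:
  assumes sg: "simple_graph G" and df: "distfun G a g" and ab: "{a, b} \<in> edges G"
  shows "distfun G b (\<lambda>x. if dsc G g b x then g x - 1 else Suc (g x))"
proof -
  let ?g = "\<lambda>x. if dsc G g b x then g x - 1 else Suc (g x)"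
  have bV: "b \<in> verts G" and aV: "a \<in> verts G" and abne: "a \<noteq> b" using edge_verts[OF sg ab] by auto
  have ga: "g a = 0" using distfunD(2)[OF df] .
  have gb: "g b = 1" using distfunD(3)[OF df ab] ga by auto
  have nda: "\<not> dsc G g b a" using dsc_ge[of G g b a] ga gb by auto
  have par_unique: "\<And>x y y'. x \<in> verts G \<Longrightarrow> {x, y} \<in> edges G \<Longrightarrow> Suc (g y) = g x \<Longrightarrow>
      {x, y'} \<in> edges G \<Longrightarrow> Suc (g y') = g x \<Longrightarrow> y = y'"
  proof -
    fix x y y' assume h: "x \<in> verts G" "{x, y} \<in> edges G" "Suc (g y) = g x" "{x, y'} \<in> edges G" "Suc (g y') = g x"
    have "x \<noteq> a" using h ga by auto
    then show "y = y'" using distfunD(4)[OF df h(1)] h by blast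
  qed
  have d2: "\<And>x y. x \<noteq> b \<Longrightarrow> x \<in> verts G \<Longrightarrow> {x, y} \<in> edges G \<Longrightarrow> Suc (g y) = g x \<Longrightarrow> dsc G g b x \<longleftrightarrow> dsc G g b y"
  proof -
    fix x y assume h: "x \<noteq> b" "x \<in> verts G" "{x, y} \<in> edges G" "Suc (g y) = g x"
    show "dsc G g b x \<longleftrightarrow> dsc G g b y"
    proof
      assume "dsc G g b x"
      then have "x = b \<or> (\<exists>y'. {x, y'} \<in> edges G \<and> Suc (g y') = g x \<and> dsc G g b y')"
        by (simp add: dsc.simps[of G g b x])
      then obtain y' where y': "{x, y'} \<in> edges G" "Suc (g y') = g x" "dsc G g b y'"
        using h(1) by blast
      have "y = y'" using par_unique[OF h(2) h(3) h(4) y'(1) y'(2)] .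
      then show "dsc G g b y" using y'(3) by simp
    next
      assume "dsc G g b y"
      then show "dsc G g b x" by (rule dsc_step[OF h(3) h(4)])
    qed
  qed
  have ebsym: "{x, y} \<in> edges G \<Longrightarrow> {y, x} \<in> edges G" for x y by (simp add: insert_commute)
  have nbr: "\<And>x y. {x, y} \<in> edges G \<Longrightarrow> Suc (g y) = g x \<or> Suc (g x) = g y"
    using distfunD(3)[OF df] by metis
  have b_only_child_a: "\<And>x. {x, b} \<in> edges G \<Longrightarrow> Suc (g b) = g x \<or> x = a"
  proof -
    fix x assume h: "{x, b} \<in> edges G"
    have xV: "x \<in> verts G" using edge_verts[OF sg h] by auto
    show "Suc (g b) = g x \<or> x = a"
      using nbr[OF h] gb distfun_zero[OF df xV] by auto
  qed
  have E: "?g a' = Suc (?g b') \<or> ?g b' = Suc (?g a')" if e: "{a', b'} \<in> edges G" for a' b'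
  proof -
    have key: "?g x = Suc (?g y) \<or> ?g y = Suc (?g x)" if e2: "{x, y} \<in> edges G" "Suc (g y) = g x" for x y
    proof (cases "x = b")
      case True
      then have "g y = 0" using gb e2 by simp
      then have "y = a" using distfun_zero[OF df] edge_verts[OF sg e2(1)] by auto
      then show ?thesis using True nda dsc_base[of G g b] gb ga by auto
    next
      case False
      have xV: "x \<in> verts G" using edge_verts[OF sg e2(1)] by auto
      have iff: "dsc G g b x \<longleftrightarrow> dsc G g b y" using d2[OF False xV e2] .
      show ?thesis
      proof (cases "dsc G g b y")
        case True
        then have "g y \<ge> 1" using dsc_ge gb by fastforce
        then show ?thesis using True iff e2(2) by auto
      next
        case False
        then show ?thesis using iff e2(2) by auto
      qed
    qed
    show ?thesis using nbr[OF e] key[OF e] key[OF ebsym[OF e]] by blast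
  qed
  have D: "\<exists>!y. {x, y} \<in> edges G \<and> Suc (?g y) = ?g x" if xV: "x \<in> verts G" and xb: "x \<noteq> b" for x
  proof (cases "dsc G g b x")
    case True
    then have "x \<noteq> a" using nda by auto
    then obtain p where p: "{x, p} \<in> edges G" "Suc (g p) = g x"
      using distfunD(4)[OF df xV] by blast
    have dp: "dsc G g b p" using d2[OF xb xV p] True by simp
    have gp: "g p \<ge> 1" using dsc_ge[OF dp] gb by simp
    show ?thesis
    proof (rule ex1I[of _ p])
      show "{x, p} \<in> edges G \<and> Suc (?g p) = ?g x" using p dp True gp by auto
    next
      fix y assume y: "{x, y} \<in> edges G \<and> Suc (?g y) = ?g x"
      show "y = p"
      proof (cases "Suc (g y) = g x")
        case True
        then show ?thesis using par_unique[OF xV _ _ p] y by blast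
      next
        case False
        then have c: "Suc (g x) = g y" using nbr y by blast
        have yV: "y \<in> verts G" using edge_verts[OF sg] y by blast
        have yb: "y \<noteq> b"
        proof
          assume "y = b"
          then have "x = a" using b_only_child_a[of x] y c by auto
          then show False using \<open>x \<noteq> a\<close> by simp
        qed
        have "dsc G g b y" using d2[OF yb yV ebsym[of x y] c] y True by auto
        then show ?thesis using y True c by auto
      qed
    qed
  next
    case False
    note ndx = False
    show ?thesis
    proof (cases "x = a")
      case True
      show ?thesis
      proof (rule ex1I[of _ b])
        show "{x, b} \<in> edges G \<and> Suc (?g b) = ?g x" using True ab nda gb ga dsc_base[of G g b] by auto
      next
        fix y assume y: "{x, y} \<in> edges G \<and> Suc (?g y) = ?g x"
        show "y = b"
        proof (rule ccontr)
          assume yb: "y \<noteq> b"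
          have yV: "y \<in> verts G" using edge_verts[OF sg] y by blast
          have c: "Suc (g x) = g y" using nbr y True ga by force
          have "\<not> dsc G g b y" using d2[OF yb yV ebsym[of x y] c] y True nda by auto
          then show False using y True ga nda by auto
        qed
      qed
    next
      case False
      then obtain p where p: "{x, p} \<in> edges G" "Suc (g p) = g x"
        using distfunD(4)[OF df xV] by blast
      have dp: "\<not> dsc G g b p" using d2[OF xb xV p] ndx by simp
      show ?thesis
      proof (rule ex1I[of _ p])
        show "{x, p} \<in> edges G \<and> Suc (?g p) = ?g x" using p dp ndx by auto
      next
        fix y assume y: "{x, y} \<in> edges G \<and> Suc (?g y) = ?g x"
        show "y = p"
        proof (cases "Suc (g y) = g x")
          case True
          then show ?thesis using par_unique[OF xV _ _ p] y by blast
        next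
          case F2: False
          then have c: "Suc (g x) = g y" using nbr y by blast
          have yV: "y \<in> verts G" using edge_verts[OF sg] y by blast
          have yb: "y \<noteq> b"
          proof
            assume "y = b"
            then have "x = a" using b_only_child_a[of x] y c by auto
            then show False using \<open>x \<noteq> a\<close> by simp
          qed
          have "\<not> dsc G g b y" using d2[OF yb yV ebsym[of x y] c] y ndx by auto
          then show ?thesis using y ndx c by auto
        qed
      qed
    qed
  qed
  show ?thesis unfolding distfun_def
  proof (intro conjI allI impI ballI)
    show "b \<in> verts G" by (rule bV)
    show "?g b = 0" using dsc_base[of G g b] gb by simp
    show "?g a' = Suc (?g b') \<or> ?g b' = Suc (?g a')" if "{a', b'} \<in> edges G" for a' b' using E[OF that] .
    show "\<exists>!y. {x, y} \<in> edges G \<and> Suc (?g y) = ?g x" if "x \<in> verts G" "x \<noteq> b" for x using D[OF that] .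
  qed
qed

lemma all_roots:
  assumes sg: "simple_graph G" and df: "distfun G r g"
  shows "z \<in> verts G \<Longrightarrow> \<exists>f. distfun G z f"
proof (induction "g z" arbitrary: z)
  case 0
  then have "z = r" using distfun_zero[OF df] by auto
  then show ?case using df by blast
next
  case (Suc k)
  have "z \<noteq> r" using Suc(2) distfunD(2)[OF df] by auto
  then obtain y where y: "{z, y} \<in> edges G" "Suc (g y) = g z"
    using distfunD(4)[OF df Suc(3)] by blast
  have yV: "y \<in> verts G" using edge_verts[OF sg y(1)] by auto
  have "k = g y" using y(2) Suc(2) by simp
  then obtain f where f: "distfun G y f" using Suc(1)[OF _ yV] by blast
  have yz: "{y, z} \<in> edges G" using y(1) by (simp add: insert_commute)
  show ?case using reroot[OF sg f yz] by blast
qed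

definition Inv :: "'a graph \<Rightarrow> bool" where
  "Inv G \<longleftrightarrow> simple_graph G \<and> (\<exists>r g. distfun G r g)"

lemma Inv_dist:
  assumes "Inv G" "z \<in> verts G"
  shows "distfun G z (\<lambda>x. gdist G x z)"
proof -
  obtain r g where sg: "simple_graph G" and df: "distfun G r g" using assms(1) unfolding Inv_def by blast
  obtain f where f: "distfun G z f" using all_roots[OF sg df assms(2)] by blast
  have "\<forall>x\<in>verts G. f x = gdist G x z" using distfun_gdist[OF sg f] by simp
  then show ?thesis using distfun_cong[OF sg f, of "\<lambda>x. gdist G x z"] by simp
qed



lemma last_take_nth: "n < length xs \<Longrightarrow> last (take (Suc n) xs) = xs ! n"
  by (simp add: take_Suc_conv_app_nth)

lemma cyc:
  assumes P: "wk G P" and Q: "wk G Q" and dP: "distinct P" and dQ: "distinct Q"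
    and lst: "last P = last Q" and hP: "hd P \<notin> set Q" and hQ: "hd Q \<notin> set P"
    and e: "{hd P, hd Q} \<in> edges G"
  shows "has_cycle G"
proof -
  have Pne: "P \<noteq> []" and Qne: "Q \<noteq> []" using P Q by auto
  have ex: "\<exists>i. i < length P \<and> P ! i \<in> set Q"
  proof (intro exI[of _ "length P - 1"] conjI)
    show "length P - 1 < length P" using Pne by simp
    have "P ! (length P - 1) = last P" using Pne by (simp add: last_conv_nth)
    then show "P ! (length P - 1) \<in> set Q" using lst Qne by simp
  qed
  define i where "i = (LEAST i. i < length P \<and> P ! i \<in> set Q)"
  have i: "i < length P" "P ! i \<in> set Q" using LeastI_ex[OF ex] unfolding i_def by auto
  have imin: "P ! i' \<notin> set Q" if "i' < i" for i'
    using not_less_Least[of i' "\<lambda>i. i < length P \<and> P ! i \<in> set Q"] that i(1) unfolding i_def by auto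
  have i0: "i \<noteq> 0"
  proof
    assume "i = 0" then show False using i hP Pne by (simp add: hd_conv_nth)
  qed
  obtain j where j: "j < length Q" "Q ! j = P ! i" using i(2) by (auto simp: in_set_conv_nth)
  have j0: "j \<noteq> 0"
  proof
    assume "j = 0"
    then have "hd Q = P ! i" using j Qne by (simp add: hd_conv_nth)
    then show False using hQ i(1) by auto
  qed
  define C where "C = take (Suc i) P @ rev (take j Q)"
  have w1: "wk G (take (Suc i) P)" using wk_take[OF P] by simp
  have w2: "wk G (rev (take j Q))" using wk_rev[OF wk_take[OF Q]] j0 by simp
  have l1: "last (take (Suc i) P) = P ! i" using last_take_nth[OF i(1)] .
  obtain j' where j': "j = Suc j'" using j0 by (cases j) auto
  have h2: "hd (rev (take j Q)) = Q ! j'" using last_take_nth[of j' Q] j j' by (simp add: hd_rev)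
  have "{Q ! j', Q ! Suc j'} \<in> edges G" using wk_nth_edge[OF Q, of j'] j(1) j' by simp
  then have "{last (take (Suc i) P), hd (rev (take j Q))} \<in> edges G"
    using l1 h2 j j' by (simp add: insert_commute)
  then have wC: "wk G C" unfolding C_def using wk_append[OF w1 w2] by simp
  have disj: "set (take (Suc i) P) \<inter> set (take j Q) = {}"
  proof (rule ccontr)
    assume "set (take (Suc i) P) \<inter> set (take j Q) \<noteq> {}"
    then obtain x where x1: "x \<in> set (take (Suc i) P)" and x2: "x \<in> set (take j Q)" by blast
    obtain a where a: "a < Suc i" "P ! a = x" using x1 i(1) by (auto simp: in_set_conv_nth)
    obtain b where b: "b < j" "Q ! b = x" using x2 j(1) by (auto simp: in_set_conv_nth)
    show False
    proof (cases "a < i")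
      case True
      then have "P ! a \<notin> set Q" using imin by blast
      moreover have "Q ! b \<in> set Q" using b(1) j(1) by (intro nth_mem) simp
      ultimately show False using a b by simp
    next
      case False
      then have "a = i" using a by simp
      then have "Q ! b = Q ! j" using a b j by simp
      then have "b = j" using dQ b j(1) by (simp add: nth_eq_iff_index_eq)
      then show False using b by simp
    qed
  qed
  have dC: "distinct C" unfolding C_def using dP dQ disj by (simp add: distinct_take)
  have lenC: "length C \<ge> 3" unfolding C_def using i(1) j(1) i0 j0 by simp
  have hdC: "hd C = hd P" unfolding C_def using Pne by (cases P) auto
  have lastC: "last C = hd Q" unfolding C_def using j0 j(1) Qne
    by (cases Q; cases j) (auto simp: last_rev)
  have "{last C, hd C} \<in> edges G" using e hdC lastC by (simp add: insert_commute)
  then show ?thesis unfolding has_cycle_def walk_wk using wC dC lenC by blast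
qed

lemma geo_distinct:
  assumes "\<forall>i<length P. h (P ! i) + i = (K::nat)"
  shows "distinct P"
  unfolding distinct_conv_nth
proof (intro allI impI)
  fix i j assume "i < length P" "j < length P" "i \<noteq> j"
  show "P ! i \<noteq> P ! j"
  proof
    assume "P ! i = P ! j"
    then have "h (P ! i) + i = h (P ! j) + j \<Longrightarrow> i = j" by simp
    then show False using assms \<open>i < length P\<close> \<open>j < length P\<close> \<open>i \<noteq> j\<close> by metis
  qed
qed

lemma geo_mem:
  assumes "\<forall>i<length P. h (P ! i) + i = (K::nat)" "y \<in> set P"
  shows "\<exists>j<length P. P ! j = y \<and> h y + j = K"
  using assms by (auto simp: in_set_conv_nth)

locale treeloc =
  fixes T :: "'a graph" and r :: 'a
  assumes tr: "is_tree T" and rV: "r \<in> verts T"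
begin

lemma sgT: "simple_graph T" using tr unfolding is_tree_def by simp

lemma conn: "u \<in> verts T \<Longrightarrow> v \<in> verts T \<Longrightarrow> \<exists>xs. wk T xs \<and> hd xs = u \<and> last xs = v"
  using tr unfolding is_tree_def connected_graph_def walk_wk by blast

lemma shortest: "x \<in> verts T \<Longrightarrow> \<exists>xs. wk T xs \<and> hd xs = x \<and> last xs = r \<and> length xs = Suc (gdist T x r)"
  using conn[OF _ rV] gdist_ex by metis

lemma lip: assumes "{x, y} \<in> edges T" shows "gdist T x r \<le> Suc (gdist T y r)"
proof -
  have xV: "x \<in> verts T" and yV: "y \<in> verts T" using edge_verts[OF sgT assms] by auto
  obtain ys where ys: "wk T ys" "hd ys = y" "last ys = r" "length ys = Suc (gdist T y r)"
    using shortest[OF yV] by blast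
  have "wk T (x # ys)" using wk_cons[OF ys(1) xV] ys(2) assms by simp
  then have "gdist T x r \<le> length (x # ys) - 1" using gdist_le[of T "x # ys" x r] ys wk_nonempty[OF ys(1)] by simp
  then show ?thesis using ys by simp
qed

lemma zero_r: "x \<in> verts T \<Longrightarrow> gdist T x r = 0 \<Longrightarrow> x = r"
  using shortest[of x] by (auto simp: length_Suc_conv)

lemma gr0: "gdist T r r = 0"
  using gdist_le[of T "[r]" r r] rV by simp

lemma step:
  assumes xV: "x \<in> verts T" and xr: "x \<noteq> r"
  shows "\<exists>y. {x, y} \<in> edges T \<and> Suc (gdist T y r) = gdist T x r"
proof -
  obtain xs where xs: "wk T xs" "hd xs = x" "last xs = r" "length xs = Suc (gdist T x r)"
    using shortest[OF xV] by blast
  obtain rest where xs2: "xs = x # rest" using xs by (cases xs) auto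
  have "rest \<noteq> []" using xs xs2 xr by auto
  then obtain y rest' where rest: "rest = y # rest'" by (cases rest) auto
  have w: "wk T (y # rest')" and e: "{x, y} \<in> edges T" using xs(1) xs2 rest by auto
  have "gdist T y r \<le> length (y # rest') - 1"
    using gdist_le[OF w] xs(3) xs2 rest by simp
  moreover have "gdist T x r \<le> Suc (gdist T y r)" using lip[OF e] .
  ultimately have "Suc (gdist T y r) = gdist T x r" using xs(4) xs2 rest by simp
  then show ?thesis using e by blast
qed

lemma geo:
  "x \<in> verts T \<Longrightarrow> \<exists>P. wk T P \<and> hd P = x \<and> last P = r \<and> length P = Suc (gdist T x r) \<and>
     (\<forall>i<length P. gdist T (P ! i) r + i = gdist T x r)"
proof (induction "gdist T x r" arbitrary: x)
  case 0
  then have "x = r" using zero_r by auto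
  then show ?case using rV 0 by (intro exI[of _ "[r]"]) auto
next
  case (Suc k)
  have "x \<noteq> r" using Suc(2) gr0 by auto
  then obtain y where y: "{x, y} \<in> edges T" "Suc (gdist T y r) = gdist T x r"
    using step[OF Suc(3)] by blast
  have yV: "y \<in> verts T" using edge_verts[OF sgT y(1)] by auto
  have "k = gdist T y r" using y Suc(2) by simp
  then obtain P where P: "wk T P" "hd P = y" "last P = r" "length P = Suc (gdist T y r)"
    "\<forall>i<length P. gdist T (P ! i) r + i = gdist T y r" using Suc(1)[OF _ yV] by blast
  have Pne: "P \<noteq> []" using P(1) by auto
  have w: "wk T (x # P)" using wk_cons[OF P(1) Suc(3)] P(2) y(1) by simp
  have g: "\<forall>i<length (x # P). gdist T ((x # P) ! i) r + i = gdist T x r"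
  proof (intro allI impI)
    fix i assume "i < length (x # P)"
    then show "gdist T ((x # P) ! i) r + i = gdist T x r"
      using P(5) y(2) by (cases i) auto
  qed
  show ?case using w g P Pne y(2) by (intro exI[of _ "x # P"]) auto
qed

lemma T1:
  assumes e: "{x, y} \<in> edges T"
  shows "gdist T x r \<noteq> gdist T y r"
proof
  assume eq: "gdist T x r = gdist T y r"
  have xV: "x \<in> verts T" and yV: "y \<in> verts T" and xy: "x \<noteq> y" using edge_verts[OF sgT e] by auto
  obtain P where P: "wk T P" "hd P = x" "last P = r" "\<forall>i<length P. gdist T (P ! i) r + i = gdist T x r"
    using geo[OF xV] by blast
  obtain Q where Q: "wk T Q" "hd Q = y" "last Q = r" "\<forall>i<length Q. gdist T (Q ! i) r + i = gdist T y r"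
    using geo[OF yV] by blast
  have "x \<notin> set Q"
  proof
    assume "x \<in> set Q"
    then obtain j where "j < length Q" "Q ! j = x" "gdist T x r + j = gdist T y r" using geo_mem[OF Q(4)] by blast
    then have "Q ! 0 = x" using eq by simp
    then show False using Q(1,2) xy by (cases Q) auto
  qed
  moreover have "y \<notin> set P"
  proof
    assume "y \<in> set P"
    then obtain j where "j < length P" "P ! j = y" "gdist T y r + j = gdist T x r" using geo_mem[OF P(4)] by blast
    then have "P ! 0 = y" using eq by simp
    then show False using P(1,2) xy by (cases P) auto
  qed
  ultimately have "has_cycle T"
    using cyc[OF P(1) Q(1) geo_distinct[OF P(4)] geo_distinct[OF Q(4)]] P Q e by simp
  then show False using tr unfolding is_tree_def by simp
qed

lemma T2:
  assumes xV: "x \<in> verts T" and e1: "{x, y1} \<in> edges T" and e2: "{x, y2} \<in> edges T"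
    and g1: "Suc (gdist T y1 r) = gdist T x r" and g2: "Suc (gdist T y2 r) = gdist T x r"
  shows "y1 = y2"
proof (rule ccontr)
  assume ne: "y1 \<noteq> y2"
  have y1V: "y1 \<in> verts T" and y2V: "y2 \<in> verts T" and xy2: "x \<noteq> y2"
    using edge_verts[OF sgT e1] edge_verts[OF sgT e2] by auto
  obtain P1 where P1: "wk T P1" "hd P1 = y1" "last P1 = r" "\<forall>i<length P1. gdist T (P1 ! i) r + i = gdist T y1 r"
    using geo[OF y1V] by blast
  obtain Q where Q: "wk T Q" "hd Q = y2" "last Q = r" "\<forall>i<length Q. gdist T (Q ! i) r + i = gdist T y2 r"
    using geo[OF y2V] by blast
  have P1ne: "P1 \<noteq> []" using P1(1) by auto
  define P where "P = x # P1"
  have wP: "wk T P" unfolding P_def using wk_cons[OF P1(1) xV] P1(2) e1 by simp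
  have gP: "\<forall>i<length P. gdist T (P ! i) r + i = gdist T x r"
  proof (intro allI impI)
    fix i assume "i < length P"
    then show "gdist T (P ! i) r + i = gdist T x r"
      using P1(4) g1 unfolding P_def by (cases i) auto
  qed
  have "x \<notin> set Q"
  proof
    assume "x \<in> set Q"
    then obtain j where "gdist T x r + j = gdist T y2 r" using geo_mem[OF Q(4)] by blast
    then show False using g2 by simp
  qed
  moreover have "y2 \<notin> set P"
  proof
    assume "y2 \<in> set P"
    then obtain j where j: "j < length P" "P ! j = y2" "gdist T y2 r + j = gdist T x r" using geo_mem[OF gP] by blast
    then have "j = 1" using g2 by simp
    then have "P1 ! 0 = y2" using j unfolding P_def by simp
    then show False using P1(2) P1ne ne by (simp add: hd_conv_nth)
  qed
  moreover have "last P = last Q" using P1 Q P1ne unfolding P_def by simp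
  ultimately have "has_cycle T"
    using cyc[OF wP Q(1) geo_distinct[OF gP] geo_distinct[OF Q(4)]] Q(2) e2 unfolding P_def by simp
  then show False using tr unfolding is_tree_def by simp
qed

lemma distfun_T: "distfun T r (\<lambda>x. gdist T x r)"
  unfolding distfun_def
proof (intro conjI allI impI ballI)
  show "r \<in> verts T" by (rule rV)
  show "gdist T r r = 0" by (rule gr0)
  fix a b assume e: "{a, b} \<in> edges T"
  have e': "{b, a} \<in> edges T" using e by (simp add: insert_commute)
  show "gdist T a r = Suc (gdist T b r) \<or> gdist T b r = Suc (gdist T a r)"
    using lip[OF e] lip[OF e'] T1[OF e] by auto
next
  fix x assume xV: "x \<in> verts T" and xr: "x \<noteq> r"
  obtain y where y: "{x, y} \<in> edges T" "Suc (gdist T y r) = gdist T x r" using step[OF xV xr] by blast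
  show "\<exists>!y. {x, y} \<in> edges T \<and> Suc (gdist T y r) = gdist T x r"
    using y T2[OF xV] by blast
qed

end

lemma tree_Inv:
  assumes "is_tree T"
  shows "Inv T"
proof -
  obtain r where rV: "r \<in> verts T" using assms unfolding is_tree_def connected_graph_def by blast
  interpret treeloc T r using assms rV by unfold_locales
  show ?thesis unfolding Inv_def using sgT distfun_T by blast
qed



definition ladj :: "nat \<Rightarrow> 'a graph \<Rightarrow> 'a vlabel \<Rightarrow> 'a vlabel \<Rightarrow> bool" where
  "ladj s G a b \<longleftrightarrow>
     (\<exists>u v. {u, v} \<in> edges G \<and> u \<noteq> v \<and>
        (a = Old u \<and> b = Sub u v \<or> a = Sub u v \<and> b = Old u \<or> a = Sub u v \<and> b = Sub v u)) \<or>
     (\<exists>v i. v \<in> verts G \<and> i < s - degree G v \<and> (a = Old v \<and> b = Leaf v i \<or> a = Leaf v i \<and> b = Old v))"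

lemma ladj_Old: "ladj s G (Old w) y \<longleftrightarrow>
   (\<exists>v. {w, v} \<in> edges G \<and> w \<noteq> v \<and> y = Sub w v) \<or> (\<exists>i. w \<in> verts G \<and> i < s - degree G w \<and> y = Leaf w i)"
  unfolding ladj_def by blast

lemma ladj_Sub: "ladj s G (Sub w v) y \<longleftrightarrow> {w, v} \<in> edges G \<and> w \<noteq> v \<and> (y = Old w \<or> y = Sub v w)"
  unfolding ladj_def by blast

lemma ladj_Leaf: "ladj s G (Leaf w i) y \<longleftrightarrow> w \<in> verts G \<and> i < s - degree G w \<and> y = Old w"
  unfolding ladj_def by blast

lemma ladj_sym: "ladj s G a b \<Longrightarrow> ladj s G b a"
proof -
  assume h: "ladj s G a b"
  show "ladj s G b a"
  proof (cases a)
    case (Old w) then show ?thesis using h by (auto simp: ladj_Old ladj_Sub ladj_Leaf)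
  next
    case (Sub w v)
    then show ?thesis using h by (auto simp: ladj_Old ladj_Sub insert_commute)
  next
    case (Leaf w i) then show ?thesis using h by (auto simp: ladj_Old ladj_Leaf)
  qed
qed

lemma ladj_ne: "ladj s G a b \<Longrightarrow> a \<noteq> b"
  unfolding ladj_def by auto

lemma L_Old: "Old w \<in> vicsek_labels s G \<longleftrightarrow> w \<in> verts G"
  unfolding vicsek_labels_def by auto
lemma L_Sub: "Sub u v \<in> vicsek_labels s G \<longleftrightarrow> {u, v} \<in> edges G \<and> u \<noteq> v"
  unfolding vicsek_labels_def by auto
lemma L_Leaf: "Leaf v i \<in> vicsek_labels s G \<longleftrightarrow> v \<in> verts G \<and> i < s - degree G v"
  unfolding vicsek_labels_def by auto

lemma ladj_L:
  assumes "simple_graph G" "ladj s G a b"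
  shows "a \<in> vicsek_labels s G"
  using assms(2) edge_verts[OF assms(1)] unfolding ladj_def
  by (auto simp: L_Old L_Sub L_Leaf insert_commute)

fun Fl :: "('a \<Rightarrow> nat) \<Rightarrow> 'a vlabel \<Rightarrow> nat" where
  "Fl D (Old w) = 3 * D w"
| "Fl D (Sub w v) = (if D v < D w then 3 * D w - 1 else 3 * D w + 1)"
| "Fl D (Leaf w i) = 3 * D w + 1"

fun base :: "'a vlabel \<Rightarrow> 'a" where
  "base (Old w) = w" | "base (Sub w v) = w" | "base (Leaf w i) = w"

locale vstep =
  fixes s :: nat and G :: "'a graph" and H :: "'a graph" and \<phi> :: "'a vlabel \<Rightarrow> 'a"
  assumes InvG: "Inv G" and s2: "2 \<le> s" and deg: "\<forall>v\<in>verts G. degree G v \<le> s"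
    and inj: "inj_on \<phi> (vicsek_labels s G)"
    and VH: "verts H = \<phi> ` vicsek_labels s G"
    and EH: "edges H =
       {{\<phi> (Old u), \<phi> (Sub u v)} | u v. {u, v} \<in> edges G \<and> u \<noteq> v}
       \<union> {{\<phi> (Sub u v), \<phi> (Sub v u)} | u v. {u, v} \<in> edges G \<and> u \<noteq> v}
       \<union> {{\<phi> (Old v), \<phi> (Leaf v i)} | v i. v \<in> verts G \<and> i < s - degree G v}"
begin

abbreviation "L \<equiv> vicsek_labels s G"

lemma sgG: "simple_graph G" using InvG unfolding Inv_def by simp

lemma ladjL: "ladj s G a b \<Longrightarrow> a \<in> L \<and> b \<in> L"
  using ladj_L[OF sgG] ladj_sym by blast

lemma EH': "edges H = {{\<phi> a, \<phi> b} | a b. ladj s G a b}"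
proof
  show "edges H \<subseteq> {{\<phi> a, \<phi> b} | a b. ladj s G a b}"
  proof
    fix e assume "e \<in> edges H"
    then consider (A) u v where "e = {\<phi> (Old u), \<phi> (Sub u v)}" "{u, v} \<in> edges G" "u \<noteq> v"
      | (B) u v where "e = {\<phi> (Sub u v), \<phi> (Sub v u)}" "{u, v} \<in> edges G" "u \<noteq> v"
      | (C) v i where "e = {\<phi> (Old v), \<phi> (Leaf v i)}" "v \<in> verts G" "i < s - degree G v"
      unfolding EH by blast
    then show "e \<in> {{\<phi> a, \<phi> b} | a b. ladj s G a b}"
    proof cases
      case A then show ?thesis unfolding ladj_def by blast
    next
      case B then show ?thesis unfolding ladj_def by blast
    next
      case C then show ?thesis unfolding ladj_def by blast
    qed
  qed
next
  show "{{\<phi> a, \<phi> b} | a b. ladj s G a b} \<subseteq> edges H"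
  proof
    fix e assume "e \<in> {{\<phi> a, \<phi> b} | a b. ladj s G a b}"
    then obtain a b where e: "e = {\<phi> a, \<phi> b}" and ab: "ladj s G a b" by blast
    from ab consider (A) u v where "{u, v} \<in> edges G" "u \<noteq> v" "a = Old u \<and> b = Sub u v \<or> a = Sub u v \<and> b = Old u"
      | (B) u v where "{u, v} \<in> edges G" "u \<noteq> v" "a = Sub u v" "b = Sub v u"
      | (C) v i where "v \<in> verts G" "i < s - degree G v" "a = Old v \<and> b = Leaf v i \<or> a = Leaf v i \<and> b = Old v"
      unfolding ladj_def by blast
    then show "e \<in> edges H"
    proof cases
      case A then show ?thesis unfolding EH e by (auto simp: insert_commute)
    next
      case B then show ?thesis unfolding EH e by blast
    next
      case C then show ?thesis unfolding EH e by (auto simp: insert_commute)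
    qed
  qed
qed

lemma edge_iff:
  assumes "a \<in> L" "b \<in> L"
  shows "{\<phi> a, \<phi> b} \<in> edges H \<longleftrightarrow> ladj s G a b"
proof
  assume "{\<phi> a, \<phi> b} \<in> edges H"
  then obtain a' b' where e: "{\<phi> a, \<phi> b} = {\<phi> a', \<phi> b'}" and ab: "ladj s G a' b'" unfolding EH' by blast
  have L': "a' \<in> L" "b' \<in> L" using ladjL[OF ab] by auto
  from e have "(\<phi> a = \<phi> a' \<and> \<phi> b = \<phi> b') \<or> (\<phi> a = \<phi> b' \<and> \<phi> b = \<phi> a')" by (auto simp: doubleton_eq_iff)
  then have "(a = a' \<and> b = b') \<or> (a = b' \<and> b = a')"
    using inj assms L' by (auto dest: inj_onD)
  then show "ladj s G a b" using ab ladj_sym by blast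
next
  assume "ladj s G a b"
  then show "{\<phi> a, \<phi> b} \<in> edges H" unfolding EH' by blast
qed

lemma finL: "finite L"
proof -
  have fV: "finite (verts G)" using sgG unfolding simple_graph_def by simp
  have "L \<subseteq> Old ` verts G \<union> (\<lambda>(u, v). Sub u v) ` (verts G \<times> verts G) \<union> (\<lambda>(v, i). Leaf v i) ` (verts G \<times> {..<s})"
  proof
    fix x assume x: "x \<in> L"
    show "x \<in> Old ` verts G \<union> (\<lambda>(u, v). Sub u v) ` (verts G \<times> verts G) \<union> (\<lambda>(v, i). Leaf v i) ` (verts G \<times> {..<s})"
    proof (cases x)
      case (Old w) then show ?thesis using x by (auto simp: L_Old)
    next
      case (Sub u v)
      then have "u \<in> verts G" "v \<in> verts G" using x edge_verts[OF sgG] by (auto simp: L_Sub)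
      then show ?thesis using Sub by force
    next
      case (Leaf v i)
      then have "v \<in> verts G" "i < s" using x by (auto simp: L_Leaf)
      then show ?thesis using Leaf by force
    qed
  qed
  then show ?thesis by (rule finite_subset) (use fV in auto)
qed

lemma sgH: "simple_graph H"
  unfolding simple_graph_def
proof (intro conjI ballI)
  show "finite (verts H)" unfolding VH using finL by simp
  fix e assume "e \<in> edges H"
  then obtain a b where e: "e = {\<phi> a, \<phi> b}" and ab: "ladj s G a b" unfolding EH' by blast
  have "a \<in> L" "b \<in> L" "a \<noteq> b" using ladjL[OF ab] ladj_ne[OF ab] by auto
  then have "\<phi> a \<noteq> \<phi> b" "\<phi> a \<in> verts H" "\<phi> b \<in> verts H" using inj VH by (auto dest: inj_onD)
  then show "\<exists>u v. e = {u, v} \<and> u \<noteq> v \<and> u \<in> verts H \<and> v \<in> verts H" using e by blast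
qed

lemma inv_phi: "a \<in> L \<Longrightarrow> inv_into L \<phi> (\<phi> a) = a"
  using inj by (simp add: inv_into_f_f)

lemma transfer:
  assumes zL: "z \<in> L" and F0: "F z = 0"
    and FE: "\<And>a b. ladj s G a b \<Longrightarrow> F a = Suc (F b) \<or> F b = Suc (F a)"
    and FD: "\<And>x. x \<in> L \<Longrightarrow> x \<noteq> z \<Longrightarrow> \<exists>!y. ladj s G x y \<and> Suc (F y) = F x"
  shows "distfun H (\<phi> z) (\<lambda>y. F (inv_into L \<phi> y))"
  unfolding distfun_def
proof (intro conjI allI impI ballI)
  show "\<phi> z \<in> verts H" using zL VH by simp
  show "F (inv_into L \<phi> (\<phi> z)) = 0" using inv_phi[OF zL] F0 by simp
next
  fix a' b' assume "{a', b'} \<in> edges H"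
  then obtain a b where e: "{a', b'} = {\<phi> a, \<phi> b}" and ab: "ladj s G a b" unfolding EH' by blast
  have L': "a \<in> L" "b \<in> L" using ladjL[OF ab] by auto
  have "(a' = \<phi> a \<and> b' = \<phi> b) \<or> (a' = \<phi> b \<and> b' = \<phi> a)" using e by (auto simp: doubleton_eq_iff)
  then show "F (inv_into L \<phi> a') = Suc (F (inv_into L \<phi> b')) \<or> F (inv_into L \<phi> b') = Suc (F (inv_into L \<phi> a'))"
    using FE[OF ab] inv_phi L' by auto
next
  fix x assume xV: "x \<in> verts H" and xz: "x \<noteq> \<phi> z"
  obtain l where l: "l \<in> L" "x = \<phi> l" using xV VH by auto
  have lz: "l \<noteq> z" using l xz by auto
  obtain y0 where y0: "ladj s G l y0" "Suc (F y0) = F l"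
    and y0u: "\<And>y. ladj s G l y \<and> Suc (F y) = F l \<Longrightarrow> y = y0" using FD[OF l(1) lz] by blast
  have y0L: "y0 \<in> L" using ladjL[OF y0(1)] by auto
  show "\<exists>!y. {x, y} \<in> edges H \<and> Suc (F (inv_into L \<phi> y)) = F (inv_into L \<phi> x)"
  proof (rule ex1I[of _ "\<phi> y0"])
    show "{x, \<phi> y0} \<in> edges H \<and> Suc (F (inv_into L \<phi> (\<phi> y0))) = F (inv_into L \<phi> x)"
      using edge_iff[OF l(1) y0L] y0 l inv_phi[OF y0L] inv_phi[OF l(1)] by simp
  next
    fix y assume y: "{x, y} \<in> edges H \<and> Suc (F (inv_into L \<phi> y)) = F (inv_into L \<phi> x)"
    have "y \<in> verts H" using edge_verts[OF sgH] y by blast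
    then obtain m where m: "m \<in> L" "y = \<phi> m" using VH by auto
    have "ladj s G l m" using edge_iff[OF l(1) m(1)] y l m by simp
    moreover have "Suc (F m) = F l" using y l m inv_phi[OF m(1)] inv_phi[OF l(1)] by simp
    ultimately have "m = y0" using y0u by blast
    then show "y = \<phi> y0" using m by simp
  qed
qed

end


context vstep begin

lemma Fl_ldist:
  assumes cV: "c \<in> verts G"
  defines "D \<equiv> (\<lambda>x. gdist G x c)"
  shows "distfun H (\<phi> (Old c)) (\<lambda>y. Fl D (inv_into L \<phi> y))"
proof -
  have df: "distfun G c D" unfolding D_def using Inv_dist[OF InvG cV] .
  note dE = distfunD(3)[OF df]
  note dD = distfunD(4)[OF df]
  have Dc: "D c = 0" using distfunD(2)[OF df] .
  show ?thesis
  proof (rule transfer)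
    show "Old c \<in> L" using cV by (simp add: L_Old)
    show "Fl D (Old c) = 0" using Dc by simp
  next
    fix a b assume ab: "ladj s G a b"
    from ab consider (A) u v where "{u, v} \<in> edges G" "u \<noteq> v" "a = Old u \<and> b = Sub u v \<or> a = Sub u v \<and> b = Old u \<or> a = Sub u v \<and> b = Sub v u"
      | (C) v i where "v \<in> verts G" "i < s - degree G v" "a = Old v \<and> b = Leaf v i \<or> a = Leaf v i \<and> b = Old v"
      unfolding ladj_def by blast
    then show "Fl D a = Suc (Fl D b) \<or> Fl D b = Suc (Fl D a)"
    proof cases
      case A
      have "D u = Suc (D v) \<or> D v = Suc (D u)" using dE[OF A(1)] .
      then show ?thesis using A(3) by auto
    next
      case C then show ?thesis by auto
    qed
  next
    fix x assume xL: "x \<in> L" and xc: "x \<noteq> Old c"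
    show "\<exists>!y. ladj s G x y \<and> Suc (Fl D y) = Fl D x"
    proof (cases x)
      case (Old w)
      have wV: "w \<in> verts G" and wc: "w \<noteq> c" using xL xc Old by (auto simp: L_Old)
      obtain v0 where v0: "{w, v0} \<in> edges G" "Suc (D v0) = D w"
        and v0u: "\<And>v. {w, v} \<in> edges G \<and> Suc (D v) = D w \<Longrightarrow> v = v0" using dD[OF wV wc] by blast
      have wv0: "w \<noteq> v0" using edge_verts[OF sgG v0(1)] by simp
      show ?thesis
      proof (rule ex1I[of _ "Sub w v0"])
        show "ladj s G x (Sub w v0) \<and> Suc (Fl D (Sub w v0)) = Fl D x"
          using Old v0 wv0 by (auto simp: ladj_Old)
      next
        fix y assume y: "ladj s G x y \<and> Suc (Fl D y) = Fl D x"
        then have "(\<exists>v. {w, v} \<in> edges G \<and> w \<noteq> v \<and> y = Sub w v) \<or> (\<exists>i. y = Leaf w i)"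
          using Old by (auto simp: ladj_Old)
        then show "y = Sub w v0"
        proof
          assume "\<exists>v. {w, v} \<in> edges G \<and> w \<noteq> v \<and> y = Sub w v"
          then obtain v where v: "{w, v} \<in> edges G" "y = Sub w v" by blast
          have "D w = Suc (D v) \<or> D v = Suc (D w)" using dE[OF v(1)] .
          then have "Suc (D v) = D w" using y v Old by (auto split: if_splits)
          then show ?thesis using v0u v by blast
        next
          assume "\<exists>i. y = Leaf w i"
          then show ?thesis using y Old by auto
        qed
      qed
    next
      case (Sub w v)
      have e: "{w, v} \<in> edges G" "w \<noteq> v" using xL Sub by (auto simp: L_Sub)
      have ev: "{v, w} \<in> edges G" using e by (simp add: insert_commute)
      have h: "D w = Suc (D v) \<or> D v = Suc (D w)" using dE[OF e(1)] .
      have nb: "\<And>y. ladj s G x y \<longleftrightarrow> y = Old w \<or> y = Sub v w" using Sub e by (simp add: ladj_Sub)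
      show ?thesis
      proof (cases "D v < D w")
        case True
        then have dw: "D w = Suc (D v)" using h by auto
        have f1: "Fl D x = 3 * D w - 1" using Sub True by simp
        have f2: "Fl D (Sub v w) = 3 * D v + 1" using dw by simp
        have f3: "Fl D (Old w) = 3 * D w" by simp
        show ?thesis
        proof (rule ex1I[of _ "Sub v w"])
          show "ladj s G x (Sub v w) \<and> Suc (Fl D (Sub v w)) = Fl D x"
            using nb f1 f2 dw by simp
        next
          fix y assume y: "ladj s G x y \<and> Suc (Fl D y) = Fl D x"
          then have "y = Old w \<or> y = Sub v w" using nb by blast
          then show "y = Sub v w" using y f1 f3 dw by auto
        qed
      next
        case False
        then have dv: "D v = Suc (D w)" using h by auto
        have f1: "Fl D x = 3 * D w + 1" using Sub False by simp
        have f2: "Fl D (Sub v w) = 3 * D v - 1" using dv by simp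
        have f3: "Fl D (Old w) = 3 * D w" by simp
        show ?thesis
        proof (rule ex1I[of _ "Old w"])
          show "ladj s G x (Old w) \<and> Suc (Fl D (Old w)) = Fl D x"
            using nb f1 f3 by simp
        next
          fix y assume y: "ladj s G x y \<and> Suc (Fl D y) = Fl D x"
          then have "y = Old w \<or> y = Sub v w" using nb by blast
          then show "y = Old w" using y f1 f2 dv by auto
        qed
      qed
    next
      case (Leaf w i)
      have nb: "\<And>y. ladj s G x y \<longleftrightarrow> y = Old w" using Leaf xL by (simp add: ladj_Leaf L_Leaf)
      show ?thesis
      proof (rule ex1I[of _ "Old w"])
        show "ladj s G x (Old w) \<and> Suc (Fl D (Old w)) = Fl D x" using nb Leaf by simp
      next
        fix y assume "ladj s G x y \<and> Suc (Fl D y) = Fl D x"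
        then show "y = Old w" using nb by simp
      qed
    qed
  qed
qed

lemma InvH: "Inv H"
proof -
  obtain r g where "distfun G r g" using InvG unfolding Inv_def by blast
  then have rV: "r \<in> verts G" by (simp add: distfun_def)
  show ?thesis unfolding Inv_def using sgH Fl_ldist[OF rV] by blast
qed

lemma dist_Old:
  assumes "c \<in> verts G" "c' \<in> verts G"
  shows "gdist H (\<phi> (Old c')) (\<phi> (Old c)) = 3 * gdist G c' c"
proof -
  have "\<phi> (Old c') \<in> verts H" using assms VH by (simp add: L_Old)
  then have "gdist H (\<phi> (Old c')) (\<phi> (Old c)) = Fl (\<lambda>x. gdist G x c) (inv_into L \<phi> (\<phi> (Old c')))"
    using distfun_gdist[OF sgH Fl_ldist[OF assms(1)]] by simp
  also have "\<dots> = 3 * gdist G c' c" using inv_phi[of "Old c'"] assms by (simp add: L_Old)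
  finally show ?thesis .
qed

end


lemma degree_nbrs:
  assumes sg: "simple_graph G"
  shows "degree G v = card {y. {v, y} \<in> edges G}"
proof -
  have "{e \<in> edges G. v \<in> e} = (\<lambda>y. {v, y}) ` {y. {v, y} \<in> edges G}"
  proof
    show "{e \<in> edges G. v \<in> e} \<subseteq> (\<lambda>y. {v, y}) ` {y. {v, y} \<in> edges G}"
    proof
      fix e assume e: "e \<in> {e \<in> edges G. v \<in> e}"
      then obtain a b where ab: "e = {a, b}" using sg unfolding simple_graph_def by blast
      then have "v = a \<or> v = b" using e by auto
      then show "e \<in> (\<lambda>y. {v, y}) ` {y. {v, y} \<in> edges G}"
      proof
        assume "v = a" then show ?thesis using ab e by auto
      next
        assume "v = b" then have "e = {v, a}" using ab by (simp add: insert_commute)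
        then show ?thesis using e by auto
      qed
    qed
  qed auto
  moreover have "inj_on (\<lambda>y. {v, y}) {y. {v, y} \<in> edges G}"
    by (rule inj_onI) (auto simp: doubleton_eq_iff)
  ultimately show ?thesis unfolding degree_def by (simp add: card_image)
qed

lemma nbr_sum:
  assumes sg: "simple_graph G" and df: "distfun G x f" and w0V: "w0 \<in> verts G"
    and fin: "finite {y. {w0, y} \<in> edges G}"
  shows "(\<Sum>y\<in>{y. {w0, y} \<in> edges G}. f y) + 2 = card {y. {w0, y} \<in> edges G} * Suc (f w0) + (if w0 = x then 2 else 0)"
proof -
  let ?N = "{y. {w0, y} \<in> edges G}"
  show ?thesis
  proof (cases "w0 = x")
    case True
    then have fo: "f w0 = 0" using distfunD(2)[OF df] by simp
    have "\<forall>y\<in>?N. f y = 1"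
    proof
      fix y assume "y \<in> ?N"
      then have "f w0 = Suc (f y) \<or> f y = Suc (f w0)" using distfunD(3)[OF df] by simp
      then show "f y = 1" using fo by simp
    qed
    then have "(\<Sum>y\<in>?N. f y) = card ?N" by simp
    then show ?thesis using True fo by simp
  next
    case False
    obtain p where p: "{w0, p} \<in> edges G" "Suc (f p) = f w0"
      and pu: "\<And>y. {w0, y} \<in> edges G \<and> Suc (f y) = f w0 \<Longrightarrow> y = p"
      using distfunD(4)[OF df w0V False] by blast
    have pN: "p \<in> ?N" using p by simp
    have rest: "\<forall>y\<in>?N - {p}. f y = Suc (f w0)"
    proof
      fix y assume y: "y \<in> ?N - {p}"
      then have "f w0 = Suc (f y) \<or> f y = Suc (f w0)" using distfunD(3)[OF df] by simp
      then show "f y = Suc (f w0)" using pu y by auto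
    qed
    have "(\<Sum>y\<in>?N. f y) = f p + (\<Sum>y\<in>?N - {p}. f y)" using sum.remove[OF fin pN] .
    also have "(\<Sum>y\<in>?N - {p}. f y) = card (?N - {p}) * Suc (f w0)" using rest by simp
    also have "card (?N - {p}) = card ?N - 1" using pN fin by simp
    finally have "(\<Sum>y\<in>?N. f y) = f p + (card ?N - 1) * Suc (f w0)" .
    moreover have "card ?N \<noteq> 0" using pN fin by auto
    then obtain k where k: "card ?N = Suc k" by (cases "card ?N") auto
    moreover note k
    ultimately have "(\<Sum>y\<in>?N. f y) + 2 = Suc (f w0) + (card ?N - 1) * Suc (f w0)" using p(2) by simp
    also have "\<dots> = card ?N * Suc (f w0)" using k by simp
    finally show ?thesis using False by simp
  qed
qed

context vstep begin

abbreviation "NH x \<equiv> {y. {x, y} \<in> edges H}"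

lemma nbrH: "l \<in> L \<Longrightarrow> NH (\<phi> l) = \<phi> ` {m. ladj s G l m}"
proof
  assume lL: "l \<in> L"
  show "NH (\<phi> l) \<subseteq> \<phi> ` {m. ladj s G l m}"
  proof
    fix y assume "y \<in> NH (\<phi> l)"
    then have e: "{\<phi> l, y} \<in> edges H" by simp
    then have "y \<in> verts H" using edge_verts[OF sgH e] by simp
    then obtain m where m: "m \<in> L" "y = \<phi> m" using VH by auto
    then show "y \<in> \<phi> ` {m. ladj s G l m}" using edge_iff[OF lL m(1)] e by auto
  qed
  show "\<phi> ` {m. ladj s G l m} \<subseteq> NH (\<phi> l)"
    using edge_iff[OF lL] ladjL by auto
qed

lemma ladj_sub_L: "{m. ladj s G l m} \<subseteq> L" using ladjL by blast

lemma card_nbrH: "l \<in> L \<Longrightarrow> card (NH (\<phi> l)) = card {m. ladj s G l m}"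
  using nbrH card_image inj_on_subset[OF inj ladj_sub_L] by metis

lemma fin_ladj: "finite {m. ladj s G l m}" using finite_subset[OF ladj_sub_L finL] .

lemma card_ladj_Old:
  assumes wV: "w \<in> verts G"
  shows "card {m. ladj s G (Old w) m} = s"
proof -
  have fV: "finite (verts G)" using sgG unfolding simple_graph_def by simp
  have eq: "{m. ladj s G (Old w) m} = Sub w ` {v. {w, v} \<in> edges G} \<union> Leaf w ` {..< s - degree G w}"
    using wV edge_verts[OF sgG] by (auto simp: ladj_Old)
  have f1: "finite {v. {w, v} \<in> edges G}"
    using edge_verts[OF sgG] by (intro finite_subset[OF _ fV]) auto
  have "card (Sub w ` {v. {w, v} \<in> edges G}) = degree G w"
    using degree_nbrs[OF sgG] by (simp add: card_image inj_on_def)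
  moreover have "card (Leaf w ` {..< s - degree G w}) = s - degree G w"
    by (simp add: card_image inj_on_def)
  moreover have "Sub w ` {v. {w, v} \<in> edges G} \<inter> Leaf w ` {..< s - degree G w} = {}" by auto
  ultimately have "card {m. ladj s G (Old w) m} = degree G w + (s - degree G w)"
    unfolding eq using f1 by (simp add: card_Un_disjoint)
  then show ?thesis using deg wV by simp
qed

lemma card_ladj_le:
  assumes lL: "l \<in> L"
  shows "card {m. ladj s G l m} \<le> s"
proof (cases l)
  case (Old w) then show ?thesis using card_ladj_Old lL by (simp add: L_Old)
next
  case (Sub w v)
  then have "{m. ladj s G l m} = {Old w, Sub v w}" using lL by (auto simp: ladj_Sub L_Sub)
  then have "card {m. ladj s G l m} \<le> 2" by (simp add: card_insert_le_m1)
  then show ?thesis using s2 by simp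
next
  case (Leaf w i)
  then have "{m. ladj s G l m} = {Old w}" using lL by (auto simp: ladj_Leaf L_Leaf)
  then show ?thesis using s2 by simp
qed

lemma degH: "\<forall>y\<in>verts H. degree H y \<le> s"
proof
  fix y assume "y \<in> verts H"
  then obtain l where l: "l \<in> L" "y = \<phi> l" using VH by auto
  show "degree H y \<le> s" using degree_nbrs[OF sgH] card_nbrH[OF l(1)] card_ladj_le[OF l(1)] l(2) by simp
qed

lemma grp: "c \<in> verts G \<Longrightarrow> {l \<in> L. base l = c} = insert (Old c) {m. ladj s G (Old c) m}"
proof
  assume cV: "c \<in> verts G"
  show "{l \<in> L. base l = c} \<subseteq> insert (Old c) {m. ladj s G (Old c) m}"
  proof
    fix l assume l: "l \<in> {l \<in> L. base l = c}"
    show "l \<in> insert (Old c) {m. ladj s G (Old c) m}"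
      using l by (cases l) (auto simp: ladj_Old L_Sub L_Leaf)
  qed
  show "insert (Old c) {m. ladj s G (Old c) m} \<subseteq> {l \<in> L. base l = c}"
    using cV by (auto simp: ladj_Old L_Old L_Sub L_Leaf)
qed

lemma baseL: "base ` L \<subseteq> verts G"
proof
  fix c assume "c \<in> base ` L"
  then obtain l where l: "l \<in> L" "c = base l" by auto
  then show "c \<in> verts G" using edge_verts[OF sgG] by (cases l) (auto simp: L_Old L_Sub L_Leaf)
qed

lemma finVG: "finite (verts G)" using sgG unfolding simple_graph_def by simp

lemma grpH: "c \<in> verts G \<Longrightarrow> \<phi> ` {l \<in> L. base l = c} = insert (\<phi> (Old c)) (NH (\<phi> (Old c)))"
  using grp nbrH[of "Old c"] by (simp add: L_Old)

lemma sum_grp: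
  "(\<Sum>y\<in>verts H. h y) = (\<Sum>c\<in>verts G. \<Sum>y\<in>insert (\<phi> (Old c)) (NH (\<phi> (Old c))). h y)"
proof -
  have "(\<Sum>y\<in>verts H. h y) = (\<Sum>l\<in>L. h (\<phi> l))" unfolding VH by (rule sum.reindex_cong[OF inj refl refl])
  also have "\<dots> = (\<Sum>c\<in>verts G. \<Sum>l\<in>{l \<in> L. base l = c}. h (\<phi> l))"
    using sum.group[OF finL finVG baseL, of "\<lambda>l. h (\<phi> l)"] by (rule sym)
  also have "\<dots> = (\<Sum>c\<in>verts G. \<Sum>y\<in>\<phi> ` {l \<in> L. base l = c}. h y)"
  proof (rule sum.cong[OF refl])
    fix c assume "c \<in> verts G"
    have "inj_on \<phi> {l \<in> L. base l = c}" by (rule inj_on_subset[OF inj]) auto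
    then show "(\<Sum>l\<in>{l \<in> L. base l = c}. h (\<phi> l)) = (\<Sum>y\<in>\<phi> ` {l \<in> L. base l = c}. h y)"
      by (rule sum.reindex_cong[symmetric, OF _ refl refl])
  qed
  also have "\<dots> = (\<Sum>c\<in>verts G. \<Sum>y\<in>insert (\<phi> (Old c)) (NH (\<phi> (Old c))). h y)"
  proof (rule sum.cong[OF refl])
    fix c assume cV: "c \<in> verts G"
    show "sum h (\<phi> ` {l \<in> L. base l = c}) = sum h (insert (\<phi> (Old c)) (NH (\<phi> (Old c))))"
      using grpH[OF cV] by (rule arg_cong)
  qed
  finally show ?thesis .
qed

lemma NH_facts:
  assumes cV: "c \<in> verts G"
  shows "finite (NH (\<phi> (Old c)))" "card (NH (\<phi> (Old c))) = s" "\<phi> (Old c) \<notin> NH (\<phi> (Old c))"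
proof -
  have oL: "Old c \<in> L" using cV by (simp add: L_Old)
  show "finite (NH (\<phi> (Old c)))" using nbrH[OF oL] fin_ladj by simp
  show "card (NH (\<phi> (Old c))) = s" using card_nbrH[OF oL] card_ladj_Old[OF cV] by simp
  show "\<phi> (Old c) \<notin> NH (\<phi> (Old c))" using edge_verts(3)[OF sgH, of "\<phi> (Old c)" "\<phi> (Old c)"] by auto
qed

lemma cardH: "card (verts H) = (s + 1) * card (verts G)"
proof -
  have "card (verts H) = (\<Sum>y\<in>verts H. 1)" by simp
  also have "\<dots> = (\<Sum>c\<in>verts G. \<Sum>y\<in>insert (\<phi> (Old c)) (NH (\<phi> (Old c))). 1)" by (rule sum_grp)
  also have "\<dots> = (\<Sum>c\<in>verts G. s + 1)"
  proof (rule sum.cong[OF refl])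
    fix c assume cV: "c \<in> verts G"
    show "(\<Sum>y\<in>insert (\<phi> (Old c)) (NH (\<phi> (Old c))). 1) = s + 1"
      using NH_facts[OF cV] by simp
  qed
  finally show ?thesis by simp
qed

end


context vstep begin

abbreviation "oc c \<equiv> \<phi> (Old c)"

lemma ocV: "c \<in> verts G \<Longrightarrow> oc c \<in> verts H" using VH by (simp add: L_Old)

lemma grp_sum:
  assumes xV: "x \<in> verts H" and cV: "c \<in> verts G"
  shows "(\<Sum>y\<in>insert (oc c) (NH (oc c)). gdist H y x) + 2
       = (s + 1) * gdist H (oc c) x + s + (if oc c = x then 2 else 0)"
proof -
  have df: "distfun H x (\<lambda>y. gdist H y x)" using Inv_dist[OF InvH xV] .
  note nf = NH_facts[OF cV]
  have "(\<Sum>y\<in>NH (oc c). gdist H y x) + 2 = card (NH (oc c)) * Suc (gdist H (oc c) x) + (if oc c = x then 2 else 0)"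
    using nbr_sum[OF sgH df ocV[OF cV] nf(1)] .
  moreover have "(\<Sum>y\<in>insert (oc c) (NH (oc c)). gdist H y x) = gdist H (oc c) x + (\<Sum>y\<in>NH (oc c). gdist H y x)"
    using nf(1) nf(3) by simp
  ultimately show ?thesis using nf(2) by simp
qed

lemma row_sum:
  assumes xV: "x \<in> verts H"
  shows "(\<Sum>y\<in>verts H. gdist H y x) + 2 * card (verts G)
       = (s + 1) * (\<Sum>c\<in>verts G. gdist H (oc c) x) + s * card (verts G) + (\<Sum>c\<in>verts G. if oc c = x then 2 else 0)"
proof -
  have "(\<Sum>y\<in>verts H. gdist H y x) + 2 * card (verts G)
      = (\<Sum>c\<in>verts G. (\<Sum>y\<in>insert (oc c) (NH (oc c)). gdist H y x)) + (\<Sum>c\<in>verts G. 2)"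
    using sum_grp[of "\<lambda>y. gdist H y x"] by (simp add: mult.commute)
  also have "\<dots> = (\<Sum>c\<in>verts G. (\<Sum>y\<in>insert (oc c) (NH (oc c)). gdist H y x) + 2)"
    by (rule sum.distrib[symmetric])
  also have "\<dots> = (\<Sum>c\<in>verts G. (s + 1) * gdist H (oc c) x + s + (if oc c = x then 2 else 0))"
  proof (rule sum.cong[OF refl])
    fix c assume "c \<in> verts G"
    then show "(\<Sum>y\<in>insert (oc c) (NH (oc c)). gdist H y x) + 2 = (s + 1) * gdist H (oc c) x + s + (if oc c = x then 2 else 0)"
      using grp_sum[OF xV] by blast
  qed
  also have "\<dots> = (s + 1) * (\<Sum>c\<in>verts G. gdist H (oc c) x) + s * card (verts G) + (\<Sum>c\<in>verts G. if oc c = x then 2 else 0)"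
    by (simp add: sum.distrib sum_distrib_left)
  finally show ?thesis .
qed

lemma oc_inj: "c \<in> verts G \<Longrightarrow> c' \<in> verts G \<Longrightarrow> oc c' = oc c \<longleftrightarrow> c' = c"
  using inj by (auto simp: L_Old dest: inj_onD)

lemma delta1:
  assumes cV: "c \<in> verts G"
  shows "(\<Sum>c'\<in>verts G. (if oc c' = oc c then 2 else 0 :: nat)) = 2"
proof -
  have "(\<Sum>c'\<in>verts G. (if oc c' = oc c then 2 else 0 :: nat)) = (\<Sum>c'\<in>verts G. (if c' = c then 2 else 0))"
    by (rule sum.cong[OF refl]) (use oc_inj[OF cV] in auto)
  also have "\<dots> = 2" using finVG cV by simp
  finally show ?thesis .
qed

lemma delta2:
  assumes cV: "c \<in> verts G"
  shows "(\<Sum>x\<in>verts H. (if oc c = x then 2 else 0 :: nat)) = 2"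
proof -
  have fH: "finite (verts H)" using sgH unfolding simple_graph_def by simp
  show ?thesis using ocV[OF cV] fH by simp
qed

lemma col_sum:
  assumes cV: "c \<in> verts G"
  shows "(\<Sum>x\<in>verts H. gdist H x (oc c)) + 2 * card (verts G)
      = (s + 1) * (3 * (\<Sum>c'\<in>verts G. gdist G c' c)) + s * card (verts G) + 2"
proof -
  have "(\<Sum>c'\<in>verts G. gdist H (oc c') (oc c)) = (\<Sum>c'\<in>verts G. 3 * gdist G c' c)"
    by (rule sum.cong[OF refl]) (use dist_Old[OF cV] in blast)
  also have "\<dots> = 3 * (\<Sum>c'\<in>verts G. gdist G c' c)" by (rule sum_distrib_left[symmetric])
  finally have A: "(\<Sum>c'\<in>verts G. gdist H (oc c') (oc c)) = 3 * (\<Sum>c'\<in>verts G. gdist G c' c)" .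
  show ?thesis using row_sum[OF ocV[OF cV]] delta1[OF cV] unfolding A by simp
qed

lemma wiener_step:
  "wiener H = 3 * real (s + 1) ^ 2 * wiener G + real (s - 2) * real (s + 1) * real (card (verts G)) ^ 2
     + real (s + 2) * real (card (verts G))"
proof -
  define N where "N = card (verts G)"
  define NH' where "NH' = card (verts H)"
  have NH'eq: "NH' = (s + 1) * N" unfolding NH'_def N_def using cardH by simp
  define SG where "SG = (\<Sum>c\<in>verts G. \<Sum>c'\<in>verts G. gdist G c' c)"
  define SH where "SH = (\<Sum>x\<in>verts H. \<Sum>y\<in>verts H. gdist H y x)"
  define X where "X = (\<Sum>c\<in>verts G. \<Sum>x\<in>verts H. gdist H x (oc c))"
  have e2: "X + N * (2 * N) = (s + 1) * (3 * SG) + N * (s * N + 2)"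
  proof -
    have "X + N * (2 * N) = (\<Sum>c\<in>verts G. (\<Sum>x\<in>verts H. gdist H x (oc c)) + 2 * N)"
      unfolding X_def N_def by (simp add: sum.distrib)
    also have "\<dots> = (\<Sum>c\<in>verts G. (s + 1) * (3 * (\<Sum>c'\<in>verts G. gdist G c' c)) + (s * N + 2))"
    proof (rule sum.cong[OF refl])
      fix c assume "c \<in> verts G"
      then show "(\<Sum>x\<in>verts H. gdist H x (oc c)) + 2 * N = (s + 1) * (3 * (\<Sum>c'\<in>verts G. gdist G c' c)) + (s * N + 2)"
        using col_sum[of c] unfolding N_def by simp
    qed
    also have "\<dots> = (\<Sum>c\<in>verts G. (s + 1) * (3 * (\<Sum>c'\<in>verts G. gdist G c' c))) + N * (s * N + 2)"
      unfolding sum.distrib N_def by simp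
    also have "(\<Sum>c\<in>verts G. (s + 1) * (3 * (\<Sum>c'\<in>verts G. gdist G c' c))) = (s + 1) * (3 * SG)"
      unfolding SG_def by (simp add: sum_distrib_left)
    finally show ?thesis .
  qed
  have e1: "SH + 2 * N * NH' = (s + 1) * X + s * N * NH' + 2 * N"
  proof -
    have "SH + 2 * N * NH' = (\<Sum>x\<in>verts H. (\<Sum>y\<in>verts H. gdist H y x) + 2 * N)"
      unfolding SH_def NH'_def by (simp add: sum.distrib)
    also have "\<dots> = (\<Sum>x\<in>verts H. (s + 1) * (\<Sum>c\<in>verts G. gdist H (oc c) x) + s * N + (\<Sum>c\<in>verts G. if oc c = x then 2 else 0))"
      by (rule sum.cong[OF refl]) (use row_sum in \<open>simp add: N_def\<close>)
    also have "\<dots> = (s + 1) * (\<Sum>x\<in>verts H. \<Sum>c\<in>verts G. gdist H (oc c) x) + s * N * NH'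
        + (\<Sum>x\<in>verts H. \<Sum>c\<in>verts G. if oc c = x then 2 else 0)"
      unfolding NH'_def by (simp add: sum.distrib sum_distrib_left)
    also have "(\<Sum>x\<in>verts H. \<Sum>c\<in>verts G. if oc c = x then 2 else 0) = (\<Sum>c\<in>verts G. \<Sum>x\<in>verts H. if oc c = x then 2 else (0::nat))"
      by (rule sum.swap)
    also have "\<dots> = (\<Sum>c\<in>verts G. 2)"
      by (rule sum.cong[OF refl]) (use delta2 in simp)
    also have "(\<Sum>x\<in>verts H. \<Sum>c\<in>verts G. gdist H (oc c) x) = (\<Sum>c\<in>verts G. \<Sum>x\<in>verts H. gdist H (oc c) x)"
      by (rule sum.swap)
    also have "\<dots> = X" unfolding X_def by (intro sum.cong refl) (rule gdist_sym)
    finally show ?thesis unfolding N_def by simp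
  qed
  have wG: "wiener G = real SG / 2"
  proof -
    have "(\<Sum>u\<in>verts G. \<Sum>v\<in>verts G. real (gdist G u v)) = real (\<Sum>u\<in>verts G. \<Sum>v\<in>verts G. gdist G u v)"
      by simp
    also have "(\<Sum>u\<in>verts G. \<Sum>v\<in>verts G. gdist G u v) = SG" unfolding SG_def by (rule sum.swap)
    finally show ?thesis unfolding wiener_def by simp
  qed
  have wH: "wiener H = real SH / 2"
  proof -
    have "(\<Sum>u\<in>verts H. \<Sum>v\<in>verts H. real (gdist H u v)) = real (\<Sum>u\<in>verts H. \<Sum>v\<in>verts H. gdist H u v)"
      by simp
    also have "(\<Sum>u\<in>verts H. \<Sum>v\<in>verts H. gdist H u v) = SH" unfolding SH_def by (rule sum.swap)
    finally show ?thesis unfolding wiener_def by simp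
  qed
  have r2: "real X + real N * (2 * real N) = (real s + 1) * (3 * real SG) + real N * (real s * real N + 2)"
  proof -
    have "real (X + N * (2 * N)) = real ((s + 1) * (3 * SG) + N * (s * N + 2))" using e2 by (rule arg_cong)
    then show ?thesis by (simp add: algebra_simps)
  qed
  have r1: "real SH + 2 * real N * ((real s + 1) * real N) = (real s + 1) * real X + real s * real N * ((real s + 1) * real N) + 2 * real N"
  proof -
    have "real (SH + 2 * N * NH') = real ((s + 1) * X + s * N * NH' + 2 * N)" using e1 by (rule arg_cong)
    then show ?thesis unfolding NH'eq by (simp add: algebra_simps)
  qed
  have s2r: "real (s - 2) = real s - 2" using s2 by simp
  have x: "real X = (real s + 1) * (3 * real SG) + real N * (real s * real N + 2) - real N * (2 * real N)"
    using r2 by linarith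
  have sh: "real SH = (real s + 1) * real X + real s * real N * ((real s + 1) * real N) + 2 * real N - 2 * real N * ((real s + 1) * real N)"
    using r1 by linarith
  have "real SH = 3 * (real s + 1) ^ 2 * real SG + 2 * (real s - 2) * (real s + 1) * real N ^ 2 + 2 * (real s + 2) * real N"
    unfolding sh x by (simp add: power2_eq_square algebra_simps)
  then show ?thesis unfolding wH wG N_def[symmetric] s2r by (simp add: algebra_simps)
qed

end


lemma step_all:
  assumes "Inv G" "2 \<le> s" "\<forall>v\<in>verts G. degree G v \<le> s" "vicsek_step s G H"
  shows "Inv H \<and> (\<forall>v\<in>verts H. degree H v \<le> s) \<and> card (verts H) = (s + 1) * card (verts G) \<and>
    wiener H = 3 * real (s + 1) ^ 2 * wiener G + real (s - 2) * real (s + 1) * real (card (verts G)) ^ 2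
     + real (s + 2) * real (card (verts G))"
proof -
  obtain \<phi> where i: "inj_on \<phi> (vicsek_labels s G)" and vh: "verts H = \<phi> ` vicsek_labels s G" and eh: "edges H =
       {{\<phi> (Old u), \<phi> (Sub u v)} | u v. {u, v} \<in> edges G \<and> u \<noteq> v}
       \<union> {{\<phi> (Sub u v), \<phi> (Sub v u)} | u v. {u, v} \<in> edges G \<and> u \<noteq> v}
       \<union> {{\<phi> (Old v), \<phi> (Leaf v i)} | v i. v \<in> verts G \<and> i < s - degree G v}"
    using assms(4) unfolding vicsek_step_def by (elim exE conjE) (rule that; assumption)
  interpret vstep s G H \<phi> by (rule vstep.intro[OF assms(1) assms(2) assms(3) i vh eh])
  show ?thesis by (intro conjI InvH degH cardH wiener_step)
qed

lemma powi1: "(q::real) \<noteq> 0 \<Longrightarrow> q powi (int t - 1) = q ^ t / q"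
  by (simp add: power_int_diff power_int_of_nat)

lemma powi2: "(q::real) \<noteq> 0 \<Longrightarrow> q powi (2 * (int t - 1)) = q ^ (2 * t) / q ^ 2"
proof -
  assume q: "q \<noteq> 0"
  have "q powi (2 * (int t - 1)) = q powi (int (2 * t) - int 2)"
    by (rule arg_cong[where f="\<lambda>k. q powi k"]) simp
  also have "\<dots> = q powi int (2 * t) / q powi int 2" using q by (intro power_int_diff) simp
  also have "\<dots> = q ^ (2 * t) / q ^ 2" by (simp only: power_int_of_nat)
  finally show ?thesis .
qed

lemma alg0:
  fixes a p q n W :: real
  assumes q: "q \<noteq> 0" and d: "3 * q - 1 \<noteq> 0"
  shows "3 * q ^ 2 * (a * p ^ 2 * W + (q - 3) * q * n ^ 2 * (a - 1) * (p ^ 2 / q ^ 2) / 2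
            + (q + 1) * n * (p / q) * (a * p - 1) / (3 * q - 1))
         + (q - 3) * q * (n * p) ^ 2 + (q + 1) * (n * p)
       = 3 * a * (p ^ 2 * q ^ 2) * W + (q - 3) * q * n ^ 2 * (3 * a - 1) * p ^ 2 / 2
         + (q + 1) * n * p * (3 * a * (q * p) - 1) / (3 * q - 1)"
proof -
  have P1: "3 * q ^ 2 * (a * p ^ 2 * W) = 3 * a * (p ^ 2 * q ^ 2) * W" by simp
  have P2: "3 * q ^ 2 * ((q - 3) * q * n ^ 2 * (a - 1) * (p ^ 2 / q ^ 2) / 2) + (q - 3) * q * (n * p) ^ 2
      = (q - 3) * q * n ^ 2 * (3 * a - 1) * p ^ 2 / 2"
    using q by (simp add: field_simps power2_eq_square)
  have e2: "3 * q ^ 2 * ((q + 1) * n * (p / q) * (a * p - 1) / (3 * q - 1)) = 3 * q * (q + 1) * n * p * (a * p - 1) / (3 * q - 1)"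
    using q d by (simp add: field_simps power2_eq_square)
  have e3: "3 * q * (q + 1) * n * p * (a * p - 1) / (3 * q - 1) + (q + 1) * (n * p) = (q + 1) * n * p * (3 * a * (q * p) - 1) / (3 * q - 1)"
    using d by (simp add: field_simps)
  have P3: "3 * q ^ 2 * ((q + 1) * n * (p / q) * (a * p - 1) / (3 * q - 1)) + (q + 1) * (n * p)
      = (q + 1) * n * p * (3 * a * (q * p) - 1) / (3 * q - 1)" using e2 e3 by simp
  have L: "3 * q ^ 2 * (a * p ^ 2 * W + (q - 3) * q * n ^ 2 * (a - 1) * (p ^ 2 / q ^ 2) / 2
            + (q + 1) * n * (p / q) * (a * p - 1) / (3 * q - 1))
         + (q - 3) * q * (n * p) ^ 2 + (q + 1) * (n * p)
      = 3 * q ^ 2 * (a * p ^ 2 * W)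
        + (3 * q ^ 2 * ((q - 3) * q * n ^ 2 * (a - 1) * (p ^ 2 / q ^ 2) / 2) + (q - 3) * q * (n * p) ^ 2)
        + (3 * q ^ 2 * ((q + 1) * n * (p / q) * (a * p - 1) / (3 * q - 1)) + (q + 1) * (n * p))"
    by (simp only: distrib_left add.assoc add.left_commute add.commute)
  show ?thesis unfolding L P1 P2 P3 ..
qed

lemma alg:
  fixes s n t :: nat and W :: real
  assumes s2: "2 \<le> s"
  defines "F \<equiv> \<lambda>t. 3 ^ t * real (s + 1) ^ (2 * t) * W
      + real (s - 2) * real (s + 1) * real n ^ 2 * (3 ^ t - 1) * (real (s + 1) powi (2 * (int t - 1))) / 2
      + real (s + 2) * real n * (real (s + 1) powi (int t - 1)) * (3 ^ t * real (s + 1) ^ t - 1)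
          / (3 * real s + 2)"
  shows "3 * real (s + 1) ^ 2 * F t + real (s - 2) * real (s + 1) * real (n * (s + 1) ^ t) ^ 2
     + real (s + 2) * real (n * (s + 1) ^ t) = F (Suc t)"
proof -
  define q where "q = real (s + 1)"
  define p where "p = q ^ t"
  define a :: real where "a = 3 ^ t"
  have q0: "q \<noteq> 0" unfolding q_def by auto
  have d: "3 * q - 1 \<noteq> 0" unfolding q_def by simp
  have s2r: "real (s - 2) = q - 3" unfolding q_def using s2 by simp
  have s3: "real (s + 2) = q + 1" unfolding q_def by simp
  have s4: "3 * real s + 2 = 3 * q - 1" unfolding q_def by simp
  have qq: "q ^ (2 * t) = (q ^ t) ^ 2" by (metis power_mult mult.commute)
  have p1: "q powi (int t - 1) = p / q" unfolding p_def using powi1[OF q0] .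
  have p2: "q powi (2 * (int t - 1)) = p ^ 2 / q ^ 2" unfolding p_def using powi2[OF q0, of t] qq by simp
  have p1': "q powi (int (Suc t) - 1) = p"
    proof -
    have "q powi (int (Suc t) - 1) = q powi int t" by (rule arg_cong[where f="\<lambda>k. q powi k"]) simp
    then show ?thesis unfolding p_def by (simp only: power_int_of_nat)
  qed
  have p2': "q powi (2 * (int (Suc t) - 1)) = p ^ 2"
  proof -
    have "q powi (2 * (int (Suc t) - 1)) = q powi int (2 * t)"
      by (rule arg_cong[where f="\<lambda>k. q powi k"]) simp
    also have "\<dots> = q ^ (2 * t)" by (simp only: power_int_of_nat)
    finally show ?thesis using qq unfolding p_def by simp
  qed
  have qq2: "q ^ (2 * Suc t) = p ^ 2 * q ^ 2"
  proof -
    have "q ^ (2 * Suc t) = (q ^ Suc t) ^ 2" by (metis power_mult mult.commute)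
    then show ?thesis unfolding p_def by (simp add: power_mult_distrib mult.commute)
  qed
  have qq3: "q ^ Suc t = q * p" unfolding p_def by simp
  have f1: "F t = a * p ^ 2 * W + (q - 3) * q * real n ^ 2 * (a - 1) * (p ^ 2 / q ^ 2) / 2
            + (q + 1) * real n * (p / q) * (a * p - 1) / (3 * q - 1)"
    unfolding F_def by (simp only: q_def[symmetric] p1 p2 s2r s3 s4 a_def[symmetric] qq p_def[symmetric])
  have f2: "F (Suc t) = 3 * a * (p ^ 2 * q ^ 2) * W + (q - 3) * q * real n ^ 2 * (3 * a - 1) * p ^ 2 / 2
         + (q + 1) * real n * p * (3 * a * (q * p) - 1) / (3 * q - 1)"
    unfolding F_def by (simp only: q_def[symmetric] p1' p2' s2r s3 s4 qq2 qq3 power_Suc a_def[symmetric] p_def[symmetric] mult.assoc)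
  have f3: "real (n * (s + 1) ^ t) = real n * p" unfolding p_def q_def by simp
  show ?thesis unfolding f1 f2 f3 s2r s3 q_def[symmetric] using alg0[OF q0 d] by simp
qed

theorem theorem3:
  fixes s n :: nat and T :: "'a graph" and V :: "nat \<Rightarrow> 'a graph"
  assumes "s \<ge> 2"
    and "is_tree T"
    and "card (verts T) = n"
    and "\<forall>v\<in>verts T. degree T v \<le> s"
    and "V 0 = T"
    and "\<forall>k. vicsek_step s (V k) (V (Suc k))"
  shows "\<forall>t. card (verts (V t)) = n * (s + 1) ^ t \<and>
    wiener (V t) =
      3 ^ t * real (s + 1) ^ (2 * t) * wiener T
      + real (s - 2) * real (s + 1) * real n ^ 2 * (3 ^ t - 1) * (real (s + 1) powi (2 * (int t - 1))) / 2
      + real (s + 2) * real n * (real (s + 1) powi (int t - 1)) * (3 ^ t * real (s + 1) ^ t - 1)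
          / (3 * real s + 2)"
proof -
  define F where "F \<equiv> \<lambda>t. 3 ^ t * real (s + 1) ^ (2 * t) * wiener T
      + real (s - 2) * real (s + 1) * real n ^ 2 * (3 ^ t - 1) * (real (s + 1) powi (2 * (int t - 1))) / 2
      + real (s + 2) * real n * (real (s + 1) powi (int t - 1)) * (3 ^ t * real (s + 1) ^ t - 1)
          / (3 * real s + 2)"
  have key: "Inv (V t) \<and> (\<forall>v\<in>verts (V t). degree (V t) v \<le> s) \<and> card (verts (V t)) = n * (s + 1) ^ t
      \<and> wiener (V t) = F t" for t
  proof (induction t)
    case 0
    show ?case using assms tree_Inv[OF assms(2)] unfolding F_def by simp
  next
    case (Suc t)
    have st: "Inv (V (Suc t)) \<and> (\<forall>v\<in>verts (V (Suc t)). degree (V (Suc t)) v \<le> s) \<and>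
      card (verts (V (Suc t))) = (s + 1) * card (verts (V t)) \<and>
      wiener (V (Suc t)) = 3 * real (s + 1) ^ 2 * wiener (V t) + real (s - 2) * real (s + 1) * real (card (verts (V t))) ^ 2
       + real (s + 2) * real (card (verts (V t)))"
      using step_all[of "V t" s "V (Suc t)"] Suc assms(1,6) by blast
    have "wiener (V (Suc t)) = F (Suc t)"
      using st Suc alg[OF assms(1), where W="wiener T" and n=n and t=t] unfolding F_def by simp
    then show ?case using st Suc by (simp add: algebra_simps)
  qed
  show ?thesis using key unfolding F_def by blast
qed

end
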